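(* A real sequence (finite or infinite) is relative convex if and only if it is strictly V-shaped.
   Context: For a real sequence $(x_i)$, $\Delta x_i=x_{i+1}-x_i$. "Increasing" means strictly increasing. A real sequence $a=(a_i)$ is relative convex if there exists an increasing real sequence $t=(t_i)$ with the same index set such that $(\Delta a_i/\Delta t_i)$ is non-decreasing. A sequence is strictly V-shaped if it falls into one of the following cases: (1) strictly monotonic; (2) strictly decreasing and then constant; (3) constant and then strictly increasing; (4) strictly decreasing and then strictly increasing; (5) strictly decreasing, then constant, then strictly increasing. Equivalently, there are indices $m\le M$ (allowed to be $+\infty$ for infinite sequences) such that $a_1>a_2>\dots>a_m=a_{m+1}=\dots=a_M<a_{M+1}<\cdots$. *)

theory Defs
  imports Complex_Main "HOL-Library.Extended_Nat"
begin

text \<open>Sequences are modelled as functions a :: nat => real restricted to an index set I,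
  which is either a finite initial segment {..<n} (a finite sequence a_0,...,a_{n-1})
  or all of nat (an infinite sequence). Indices start at 0 instead of 1.\<close>

definition seq_index_set :: "nat set \<Rightarrow> bool" where
  "seq_index_set I \<longleftrightarrow> (\<exists>n. I = {..<n}) \<or> I = UNIV"

definition fdiff :: "(nat \<Rightarrow> real) \<Rightarrow> nat \<Rightarrow> real" where
  "fdiff x i = x (Suc i) - x i"

definition relative_convex :: "nat set \<Rightarrow> (nat \<Rightarrow> real) \<Rightarrow> bool" where
  "relative_convex I a \<longleftrightarrow>
     (\<exists>t :: nat \<Rightarrow> real. strict_mono_on I t \<and>
        (\<forall>i j. i \<le> j \<and> Suc j \<in> I \<longrightarrow>
            fdiff a i / fdiff t i \<le> fdiff a j / fdiff t j))"

definition strictly_V_shaped :: "nat set \<Rightarrow> (nat \<Rightarrow> real) \<Rightarrow> bool" where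
  "strictly_V_shaped I a \<longleftrightarrow>
     (\<exists>m M :: enat. m \<le> M \<and>
        (\<forall>i. Suc i \<in> I \<longrightarrow>
           (enat (Suc i) \<le> m \<longrightarrow> a i > a (Suc i)) \<and>
           (m \<le> enat i \<and> enat (Suc i) \<le> M \<longrightarrow> a i = a (Suc i)) \<and>
           (M \<le> enat i \<longrightarrow> a i < a (Suc i))))"

end

theory Submission
  imports Defs
begin

lemma dc: "seq_index_set I \<Longrightarrow> j \<in> I \<Longrightarrow> i \<le> j \<Longrightarrow> i \<in> I"
  unfolding seq_index_set_def by auto

lemma enat_split: "enat (Suc j) \<le> m \<or> m \<le> enat j"
  by (cases m) auto

lemma dir1:
  assumes I: "seq_index_set I" and rc: "relative_convex I a"
  shows "strictly_V_shaped I a"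
proof -
  obtain t where sm: "strict_mono_on I t" and
    H: "\<And>i j. i \<le> j \<Longrightarrow> Suc j \<in> I \<Longrightarrow> fdiff a i / fdiff t i \<le> fdiff a j / fdiff t j"
    using rc unfolding relative_convex_def by blast
  have tpos: "fdiff t i > 0" if "Suc i \<in> I" for i
  proof -
    have "i \<in> I" using dc[OF I that] by simp
    then have "t i < t (Suc i)" using strict_mono_onD[OF sm _ that] by simp
    then show ?thesis unfolding fdiff_def by simp
  qed
  have ge: "fdiff a j \<ge> 0" if "i \<le> j" "Suc j \<in> I" "fdiff a i \<ge> 0" for i j
  proof -
    have "Suc i \<in> I" using dc[OF I that(2)] that(1) by simp
    then have "fdiff a i / fdiff t i \<ge> 0" using tpos[of i] that(3) by simp
    then have "fdiff a j / fdiff t j \<ge> 0" using H[OF that(1,2)] by linarith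
    then show ?thesis using tpos[OF that(2)] by (simp add: zero_le_divide_iff)
  qed
  have gt: "fdiff a j > 0" if "i \<le> j" "Suc j \<in> I" "fdiff a i > 0" for i j
  proof -
    have "Suc i \<in> I" using dc[OF I that(2)] that(1) by simp
    then have "fdiff a i / fdiff t i > 0" using tpos[of i] that(3) by simp
    then have "fdiff a j / fdiff t j > 0" using H[OF that(1,2)] by linarith
    then show ?thesis using tpos[OF that(2)] by (simp add: zero_less_divide_iff)
  qed
  define P where "P i \<longleftrightarrow> Suc i \<in> I \<and> fdiff a i \<ge> 0" for i
  define Q where "Q i \<longleftrightarrow> Suc i \<in> I \<and> fdiff a i > 0" for i
  define m where "m = (if \<exists>i. P i then enat (LEAST i. P i) else \<infinity>)"
  define M where "M = (if \<exists>i. Q i then enat (LEAST i. Q i) else \<infinity>)"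
  have mM: "m \<le> M"
  proof (cases "\<exists>i. Q i")
    case qex: True
    then obtain i where "Q i" by blast
    then have "P i" unfolding P_def Q_def by auto
    have "P (LEAST i. Q i)" using LeastI[of Q, OF \<open>Q i\<close>] unfolding P_def Q_def by auto
    then have "(LEAST i. P i) \<le> (LEAST i. Q i)" by (rule Least_le)
    moreover have "m = enat (LEAST i. P i)" using \<open>P i\<close> unfolding m_def by auto
    moreover have "M = enat (LEAST i. Q i)" using qex unfolding M_def by auto
    ultimately show ?thesis by simp
  next
    case False
    then have "M = \<infinity>" unfolding M_def by auto
    then show ?thesis by simp
  qed
  show ?thesis unfolding strictly_V_shaped_def
  proof (intro exI conjI allI impI)
    show "m \<le> M" by (rule mM)
  next
    fix i assume i: "Suc i \<in> I" "enat (Suc i) \<le> m"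
    have "\<not> P i"
    proof (cases "\<exists>i. P i")
      case True
      then have "i < (LEAST i. P i)" using i(2) unfolding m_def by simp
      then show ?thesis by (rule not_less_Least)
    next
      case False then show ?thesis by blast
    qed
    then show "a i > a (Suc i)" using i(1) unfolding P_def fdiff_def by auto
  next
    fix i assume i: "Suc i \<in> I" "m \<le> enat i \<and> enat (Suc i) \<le> M"
    have ex: "\<exists>i. P i" using i unfolding m_def by (auto split: if_splits)
    then have "P (LEAST i. P i)" by (rule LeastI_ex)
    moreover have "(LEAST i. P i) \<le> i" using i ex unfolding m_def by simp
    ultimately have "fdiff a i \<ge> 0" using ge i(1) unfolding P_def by blast
    moreover have "\<not> Q i"
    proof (cases "\<exists>i. Q i")
      case True
      then have "i < (LEAST i. Q i)" using i(2) unfolding M_def by simp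
      then show ?thesis by (rule not_less_Least)
    next
      case False then show ?thesis by blast
    qed
    ultimately show "a i = a (Suc i)" using i(1) unfolding Q_def fdiff_def by auto
  next
    fix i assume i: "Suc i \<in> I" "M \<le> enat i"
    have ex: "\<exists>i. Q i" using i unfolding M_def by (auto split: if_splits)
    then have "Q (LEAST i. Q i)" by (rule LeastI_ex)
    moreover have "(LEAST i. Q i) \<le> i" using i ex unfolding M_def by simp
    ultimately have "fdiff a i > 0" using gt i(1) unfolding Q_def by blast
    then show "a i < a (Suc i)" unfolding fdiff_def by simp
  qed
qed

lemma dir2:
  assumes I: "seq_index_set I" and v: "strictly_V_shaped I a"
  shows "relative_convex I a"
proof -
  obtain m M where mM: "m \<le> M" and
    V: "\<And>i. Suc i \<in> I \<Longrightarrow>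
           (enat (Suc i) \<le> m \<longrightarrow> a i > a (Suc i)) \<and>
           (m \<le> enat i \<and> enat (Suc i) \<le> M \<longrightarrow> a i = a (Suc i)) \<and>
           (M \<le> enat i \<longrightarrow> a i < a (Suc i))"
    using v unfolding strictly_V_shaped_def by blast
  define d where "d k = (if a (Suc k) = a k then 1 else \<bar>a (Suc k) - a k\<bar>)" for k
  define t where "t i = (\<Sum>k<i. d k)" for i
  have dpos: "d k > 0" for k unfolding d_def by auto
  have ft: "fdiff t i = d i" for i unfolding fdiff_def t_def by simp
  have rat: "fdiff a i / fdiff t i = sgn (fdiff a i)" for i
    unfolding ft unfolding d_def fdiff_def by (auto simp: sgn_if abs_if divide_eq_minus_1_iff)
  have sm: "strict_mono_on I t"
  proof -
    have "strict_mono t" unfolding strict_mono_Suc_iff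
    proof
      fix n show "t n < t (Suc n)" using ft[of n] dpos[of n] unfolding fdiff_def by linarith
    qed
    then show ?thesis by (meson strict_monoD strict_mono_onI)
  qed
  have key: "sgn (fdiff a i) \<le> sgn (fdiff a j)" if ij: "i \<le> j" "Suc j \<in> I" for i j
  proof -
    have si: "Suc i \<in> I" using dc[OF I ij(2)] ij(1) by simp
    note Vi = V[OF si] and Vj = V[OF ij(2)]
    have eij: "enat (Suc i) \<le> enat (Suc j)" using ij(1) by simp
    consider "enat (Suc j) \<le> m" | "m \<le> enat j" "enat (Suc j) \<le> M" | "M \<le> enat j"
      using enat_split[of j m] enat_split[of j M] by blast
    then show ?thesis
    proof cases
      case 1
      then have "enat (Suc i) \<le> m" using eij by (rule order_trans[rotated])
      then show ?thesis using Vi Vj 1 unfolding fdiff_def by simp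
    next
      case 2
      have "enat (Suc i) \<le> M" using eij 2(2) by (rule order_trans)
      then have "a i > a (Suc i) \<or> a i = a (Suc i)" using Vi enat_split[of i m] by blast
      then show ?thesis using Vj 2 unfolding fdiff_def by auto
    next
      case 3
      then show ?thesis using Vj by (auto simp: fdiff_def sgn_if)
    qed
  qed
  show ?thesis unfolding relative_convex_def
  proof (intro exI conjI allI impI)
    show "strict_mono_on I t" by (rule sm)
  next
    fix i j assume "i \<le> j \<and> Suc j \<in> I"
    then show "fdiff a i / fdiff t i \<le> fdiff a j / fdiff t j"
      unfolding rat using key by blast
  qed
qed

theorem theorem2p2:
  fixes I :: "nat set" and a :: "nat \<Rightarrow> real"
  assumes "seq_index_set I"
  shows "relative_convex I a \<longleftrightarrow> strictly_V_shaped I a"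
  using dir1[OF assms] dir2[OF assms] by blast

end
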